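(* Fix $\alpha>0$ and positive integers $n$ and $h$. If $\pi\in S_n$ is chosen uniformly at random, then $$\Pr\big[\mathrm{Int}(\pi,\pi+h)\ge n^{2/3+\alpha}\big]\le\big(e^5 n^{-3\alpha/2}\big)^{n^{2/3+\alpha}}.$$
   Context: For a sequence $\sigma=(\sigma(1),\dots,\sigma(n))$ of distinct integers, an exact pattern of $\sigma$ is a sequence $\rho=(\rho(1),\dots,\rho(k))$ such that there are indices $1\le i_1<\dots<i_k\le n$ with $\sigma(i_j)=\rho(j)$ for all $j$. For $\pi\in S_n$ (in one-line notation) and an integer $h$, $\pi+h$ denotes the sequence $(\pi(1)+h,\dots,\pi(n)+h)$. The ordered intersection $\mathrm{Int}(\sigma,\tau)$ of two such sequences is the largest $k$ such that $\sigma$ and $\tau$ share a common exact pattern of length $k$. *)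

theory Defs
  imports Complex_Main "HOL-Library.Sublist" "HOL-Combinatorics.Multiset_Permutations"
begin

text \<open>A permutation of [n] in one-line notation is a list of integers with distinct
entries whose set of entries is {1..n}.  An exact pattern of a sequence is a
(not necessarily contiguous) subsequence, i.e. the library notion subseq.\<close>

definition shift_seq :: "int list \<Rightarrow> int \<Rightarrow> int list" where
  "shift_seq \<pi> h = map (\<lambda>x. x + h) \<pi>"

definition ord_int :: "int list \<Rightarrow> int list \<Rightarrow> nat" where
  "ord_int \<sigma> \<tau> = Max {length \<rho> | \<rho>. subseq \<rho> \<sigma> \<and> subseq \<rho> \<tau>}"

end

theory Submission
  imports Defs
begin

lemma nths_alt: "nths xs I = map (nth xs) (filter (\<lambda>i. i \<in> I) [0..<length xs])"
proof (induction xs rule: rev_induct)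
  case Nil then show ?case by simp
next
  case (snoc x xs)
  have "map (nth (xs@[x])) (filter (\<lambda>i. i \<in> I) [0..<length xs])
      = map (nth xs) (filter (\<lambda>i. i \<in> I) [0..<length xs])"
    by (intro map_cong) (auto simp: nth_append)
  then show ?case using snoc by (simp add: nths_append nths_singleton)
qed

lemma det:
  fixes p q :: "int list" and h :: int
  assumes "length p = n" "length q = n" "length is = k" "length js = k" "set js \<subseteq> {..<n}" "h > 0"
    "\<forall>t<k. p!(is!t) = p!(js!t) + h" "\<forall>t<k. q!(is!t) = q!(js!t) + h"
    "\<forall>x<n. x \<notin> set is \<longrightarrow> p!x = q!x" "\<forall>x<n. p!x \<ge> 0" "\<forall>x<n. q!x \<ge> 0"
  shows "p = q"
proof -
  have *: "\<forall>x<n. nat (p!x + q!x) < N \<longrightarrow> p!x = q!x" for N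
  proof (induction N)
    case 0 then show ?case by simp
  next
    case (Suc N)
    show ?case
    proof (intro allI impI)
      fix x assume x: "x < n" "nat (p!x + q!x) < Suc N"
      show "p!x = q!x"
      proof (cases "x \<in> set is")
        case False then show ?thesis using assms(9) x by auto
      next
        case True
        then obtain t where t: "t < k" "is!t = x" using assms(3) by (auto simp: in_set_conv_nth)
        have y: "js!t < n" using assms(4,5) t nth_mem by fastforce
        have "p!x = p!(js!t) + h" "q!x = q!(js!t) + h" using assms(7,8) t by auto
        moreover have "p!(js!t) \<ge> 0" "q!(js!t) \<ge> 0" using assms(10,11) y by auto
        moreover have "nat (p!(js!t) + q!(js!t)) < N" using calculation x assms(6) by linarith
        ultimately show ?thesis using Suc y by auto
      qed
    qed
  qed
  show ?thesis
    by (rule nth_equalityI) (use * assms(1,2) in auto)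
qed

lemma perm_props:
  assumes "\<pi> \<in> permutations_of_set {1..int n}"
  shows "length \<pi> = n" "distinct \<pi>" "set \<pi> = {1..int n}"
proof -
  show d: "distinct \<pi>" and s: "set \<pi> = {1..int n}" using assms by (auto simp: permutations_of_set_def)
  show "length \<pi> = n" using distinct_card[OF d] s by simp
qed

lemma fl_props:
  assumes "I \<subseteq> {0..<n}"
  shows "set (filter (\<lambda>i. i \<in> I) [0..<n]) = I" "length (filter (\<lambda>i. i \<in> I) [0..<n]) = card I"
proof -
  show s: "set (filter (\<lambda>i. i \<in> I) [0..<n]) = I" using assms by auto
  show "length (filter (\<lambda>i. i \<in> I) [0..<n]) = card I"
    using distinct_card[of "filter (\<lambda>i. i \<in> I) [0..<n]"] s by simp
qed

lemma count_B:
  fixes h :: int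
  assumes "h > 0" "I \<subseteq> {0..<n}" "J \<subseteq> {0..<n}" "card I = k" "card J = k" "k \<le> n"
  shows "card {\<pi> \<in> permutations_of_set {1..int n}.
      map (nth \<pi>) (filter (\<lambda>i. i \<in> I) [0..<n]) = map (\<lambda>x. x + h) (map (nth \<pi>) (filter (\<lambda>i. i \<in> J) [0..<n]))}
    \<le> \<Prod>{k+1..n}"
proof -
  let ?B = "{\<pi> \<in> permutations_of_set {1..int n}.
      map (nth \<pi>) (filter (\<lambda>i. i \<in> I) [0..<n]) = map (\<lambda>x. x + h) (map (nth \<pi>) (filter (\<lambda>i. i \<in> J) [0..<n]))}"
  let ?D = "{xs. length xs = n - k \<and> distinct xs \<and> set xs \<subseteq> {1..int n}}"
  let ?g = "\<lambda>\<pi>. nths \<pi> (- I)"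
  have cn: "card {1..int n} = n" by simp
  have cD: "card ?D = \<Prod>{k+1..n}"
    using card_lists_distinct_length_eq[of "{1..int n}" "n-k"] assms(6) by simp
  have fD: "finite ?D"
    by (rule finite_subset[OF _ finite_lists_length_eq[of "{1..int n}" "n-k"]]) auto
  have cI: "{i. i < n \<and> i \<notin> I} = {0..<n} - I" by auto
  have cI2: "card ({0..<n} - I) = n - k" using assms(2,4) by (simp add: card_Diff_subset finite_subset)
  have map: "?g ` ?B \<subseteq> ?D"
  proof
    fix ys assume "ys \<in> ?g ` ?B"
    then obtain \<pi> where p: "\<pi> \<in> ?B" "ys = ?g \<pi>" by blast
    note pp = perm_props[of \<pi> n]
    show "ys \<in> ?D" using p pp set_nths_subset[of \<pi> "-I"]
      by (simp add: length_nths cI cI2)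
  qed
  have inj: "inj_on ?g ?B"
  proof (rule inj_onI)
    fix p q assume p: "p \<in> ?B" and q: "q \<in> ?B" and e: "?g p = ?g q"
    note pp = perm_props[of p n] and qq = perm_props[of q n]
    have lp: "length p = n" and lq: "length q = n" using p q pp qq by auto
    let ?is = "filter (\<lambda>i. i \<in> I) [0..<n]" and ?js = "filter (\<lambda>i. i \<in> J) [0..<n]"
    have li: "length ?is = k" and lj: "length ?js = k" using fl_props assms by auto
    have sj: "set ?js \<subseteq> {..<n}" using fl_props(1)[OF assms(3)] assms(3) by auto
    have si: "set ?is = I" using fl_props(1)[OF assms(2)] .
    have ep: "\<forall>t<k. p!(?is!t) = p!(?js!t) + h"
    proof (intro allI impI)
      fix t assume t: "t < k"
      have "map (nth p) ?is ! t = map (\<lambda>x. x + h) (map (nth p) ?js) ! t" using p by simp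
      then show "p!(?is!t) = p!(?js!t) + h" using t li lj by simp
    qed
    have eq: "\<forall>t<k. q!(?is!t) = q!(?js!t) + h"
    proof (intro allI impI)
      fix t assume t: "t < k"
      have "map (nth q) ?is ! t = map (\<lambda>x. x + h) (map (nth q) ?js) ! t" using q by simp
      then show "q!(?is!t) = q!(?js!t) + h" using t li lj by simp
    qed
    have out: "\<forall>x<n. x \<notin> set ?is \<longrightarrow> p!x = q!x"
    proof (intro allI impI)
      fix x assume x: "x < n" "x \<notin> set ?is"
      let ?os = "filter (\<lambda>i. i \<in> - I) [0..<n]"
      have e2: "map (nth p) ?os = map (nth q) ?os" using e lp lq by (simp add: nths_alt)
      have "x \<in> set ?os" using x si by auto
      then obtain t where t: "t < length ?os" "?os ! t = x" by (metis in_set_conv_nth)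
      then show "p!x = q!x" using e2 t x by (metis nth_map)
    qed
    have nnp: "\<forall>x<n. p!x \<ge> 0" using pp p lp by (auto dest!: nth_mem)
    have nnq: "\<forall>x<n. q!x \<ge> 0" using qq q lq by (auto dest!: nth_mem)
    show "p = q" by (rule det[OF lp lq li lj sj assms(1) ep eq out nnp nnq])
  qed
  have "card ?B \<le> card ?D" by (rule card_inj_on_le[OF inj map fD])
  then show ?thesis using cD by simp
qed

lemma count_A:
  fixes h :: int
  assumes "h > 0" "k \<le> n"
  shows "card {\<pi> \<in> permutations_of_set {1..int n}. \<exists>\<rho>. subseq \<rho> \<pi> \<and> subseq \<rho> (shift_seq \<pi> h) \<and> length \<rho> = k}
    \<le> (n choose k)^2 * \<Prod>{k+1..n}"
proof -
  let ?P = "permutations_of_set {1..int n}"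
  let ?A = "{\<pi> \<in> ?P. \<exists>\<rho>. subseq \<rho> \<pi> \<and> subseq \<rho> (shift_seq \<pi> h) \<and> length \<rho> = k}"
  let ?S = "{I. I \<subseteq> {0..<n} \<and> card I = k}"
  let ?W = "?S \<times> ?S"
  let ?B = "\<lambda>(I,J). {\<pi> \<in> ?P.
      map (nth \<pi>) (filter (\<lambda>i. i \<in> I) [0..<n]) = map (\<lambda>x. x + h) (map (nth \<pi>) (filter (\<lambda>i. i \<in> J) [0..<n]))}"
  have fS: "finite ?S" by simp
  have cS: "card ?S = n choose k" using n_subsets[of "{0..<n}" k] by simp
  have fW: "finite ?W" using fS by simp
  have sub: "?A \<subseteq> (\<Union>w\<in>?W. ?B w)"
  proof
    fix \<pi> assume pA: "\<pi> \<in> ?A"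
    then obtain \<rho> where r: "\<pi> \<in> ?P" "subseq \<rho> \<pi>" "subseq \<rho> (shift_seq \<pi> h)" "length \<rho> = k" by blast
    have lp: "length \<pi> = n" using perm_props(1)[OF r(1)] .
    obtain N1 where N1: "\<rho> = nths \<pi> N1" using r(2) subseq_conv_nths by blast
    obtain N2 where N2: "\<rho> = nths (shift_seq \<pi> h) N2" using r(3) subseq_conv_nths by blast
    define I where "I = N1 \<inter> {0..<n}"
    define J where "J = N2 \<inter> {0..<n}"
    have f1: "filter (\<lambda>i. i \<in> N1) [0..<n] = filter (\<lambda>i. i \<in> I) [0..<n]"
      unfolding I_def by (intro filter_cong) auto
    have f2: "filter (\<lambda>i. i \<in> N2) [0..<n] = filter (\<lambda>i. i \<in> J) [0..<n]"
      unfolding J_def by (intro filter_cong) auto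
    have e1: "\<rho> = map (nth \<pi>) (filter (\<lambda>i. i \<in> I) [0..<n])"
      using N1 f1 lp by (simp add: nths_alt)
    have e2: "\<rho> = map (\<lambda>x. x + h) (map (nth \<pi>) (filter (\<lambda>i. i \<in> J) [0..<n]))"
      using N2 f2 lp by (simp add: nths_alt shift_seq_def nths_map)
    have cI: "card I = k"
    proof -
      have "{i. i < length \<pi> \<and> i \<in> N1} = I" using lp I_def by auto
      then show ?thesis using r(4) N1 length_nths[of \<pi> N1] by simp
    qed
    have cJ: "card J = k"
    proof -
      have "{i. i < length (shift_seq \<pi> h) \<and> i \<in> N2} = J" using lp J_def by (auto simp: shift_seq_def)
      then show ?thesis using r(4) N2 length_nths[of "shift_seq \<pi> h" N2] by simp
    qed
    have "(I,J) \<in> ?W" using cI cJ I_def J_def by auto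
    moreover have "\<pi> \<in> ?B (I,J)" using e1 e2 r(1) by simp
    ultimately show "\<pi> \<in> (\<Union>w\<in>?W. ?B w)" by blast
  qed
  have "card ?A \<le> card (\<Union>w\<in>?W. ?B w)"
  proof (rule card_mono[OF _ sub])
    have "finite ?P" by simp
    then show "finite (\<Union>w\<in>?W. ?B w)" using fW by auto
  qed
  also have "\<dots> \<le> (\<Sum>w\<in>?W. card (?B w))" by (rule card_UN_le[OF fW])
  also have "\<dots> \<le> (\<Sum>w\<in>?W. \<Prod>{k+1..n})"
  proof (rule sum_mono)
    fix w assume "w \<in> ?W"
    then obtain I J where w: "w = (I,J)" "I \<subseteq> {0..<n}" "card I = k" "J \<subseteq> {0..<n}" "card J = k" by auto
    show "card (?B w) \<le> \<Prod>{k+1..n}" using count_B[OF assms(1) w(2) w(4) w(3) w(5) assms(2)] w(1) by simp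
  qed
  also have "\<dots> = (n choose k)^2 * \<Prod>{k+1..n}" using cS by (simp add: card_cartesian_product power2_eq_square)
  finally show ?thesis .
qed

lemma pow_fact_le_exp:
  fixes x :: real assumes "x \<ge> 0"
  shows "x^k / fact k \<le> exp x"
proof -
  have "x^k / fact k \<le> (\<Sum>n\<le>k. x^n/fact n)"
    by (rule member_le_sum) (use assms in auto)
  also have "\<dots> \<le> exp x"
    using assms summable_exp_generic[of x]
    by (auto simp: exp_def divide_inverse ac_simps intro!: sum_le_suminf)
  finally show ?thesis .
qed

lemma fact_lower: "(real k)^k \<le> exp (real k) * fact k"
proof -
  have "(real k)^k / fact k \<le> exp (real k)" by (rule pow_fact_le_exp) simp
  then show ?thesis by (simp add: divide_le_eq)
qed

lemma choose_le: "k \<le> n \<Longrightarrow> real (n choose k) * fact k \<le> real n ^ k"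
proof -
  assume k: "k \<le> n"
  have "fact k * fact (n - k) * (n choose k) = (fact n :: nat)" by (rule binomial_fact_lemma[OF k])
  then have e: "fact n = fact (n - k) * ((n choose k) * fact k)" by (simp add: ac_simps)
  have "(n choose k) * fact k = fact n div fact (n - k)"
    unfolding e by (rule nonzero_mult_div_cancel_left[symmetric]) simp
  also have "\<dots> \<le> n ^ k" by (rule fact_div_fact_le_pow[OF k])
  finally have "(n choose k) * fact k \<le> n ^ k" .
  then have "real ((n choose k) * fact k) \<le> real (n ^ k)" by linarith
  then show ?thesis by simp
qed

lemma real_bound:
  fixes \<alpha> m c :: real and n k :: nat
  assumes a: "\<alpha> > 0" and n: "n \<ge> 1" and m: "m = real n powr (2/3 + \<alpha>)" and km: "real k \<ge> m" and kn: "k \<le> n"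
    and c: "c = exp 5 * real n powr (- 3 * \<alpha> / 2)" and c1: "c < 1"
  shows "real (n choose k)^2 / fact k \<le> c powr m"
proof -
  have N: "real n \<ge> 1" using n by simp
  have m1: "m \<ge> 1" unfolding m by (rule ge_one_powr_ge_zero[OF N]) (use a in auto)
  have K: "real k \<ge> 1" using km m1 by linarith
  have k0: "k > 0" using K by simp
  define b where "b = exp 3 * real n powr (- 3 * \<alpha>)"
  have fk: "fact k > (0::real)" by simp
  have C: "real (n choose k) \<le> real n ^ k / fact k" using choose_le[OF kn] by (simp add: le_divide_eq)
  have "real (n choose k)^2 / fact k \<le> (real n ^ k / fact k)^2 / fact k"
    by (intro divide_right_mono power_mono C) auto
  also have "\<dots> = (real n ^ k)^2 / (fact k)^3" by (simp add: power2_eq_square power3_eq_cube)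
  also have "\<dots> \<le> (real n ^ k)^2 / ((real k)^k / exp (real k))^3"
  proof (rule divide_left_mono)
    show "((real k)^k / exp (real k))^3 \<le> (fact k)^3"
      by (rule power_mono) (use fact_lower[of k] in \<open>auto simp: divide_le_eq mult.commute\<close>)
    show "0 < (fact k)^3 * ((real k)^k / exp (real k))^3" using K by simp
  qed simp
  also have "\<dots> = (exp 3 * (real n)^2 / (real k)^3)^k"
    by (simp add: power_divide power_mult_distrib exp_of_nat_mult[symmetric] power_mult[symmetric] mult.commute)
  also have "\<dots> \<le> (exp 3 * (real n)^2 / m^3)^k"
    by (intro power_mono divide_left_mono mult_pos_pos) (use km m1 in auto)
  also have "exp 3 * (real n)^2 / m^3 = b"
  proof -
    have "m^3 = real n powr (2 + 3*\<alpha>)" unfolding m using N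
      by (simp add: powr_realpow[symmetric] powr_powr algebra_simps)
    moreover have "real n powr (2 + 3*\<alpha>) = (real n)^2 * real n powr (3*\<alpha>)"
      using N by (simp add: powr_add powr_realpow)
    moreover have "real n powr (- 3 * \<alpha>) = 1 / real n powr (3*\<alpha>)"
      using powr_minus_divide[of "real n" "3*\<alpha>"] by simp
    ultimately show ?thesis unfolding b_def using N by (simp add: field_simps)
  qed
  finally have s1: "real (n choose k)^2 / fact k \<le> b^k" .
  have b0: "b > 0" unfolding b_def using N by simp
  have cb: "b = c^2 / exp 7"
  proof -
    have "(real n powr (- 3 * \<alpha> / 2))^2 = real n powr (- 3 * \<alpha>)" using N
      by (simp add: powr_realpow[symmetric] powr_powr)
    moreover have "(exp 5 :: real)^2 = exp 10" by (simp add: exp_of_nat_mult[symmetric] power2_eq_square exp_add[symmetric])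
    moreover have e: "exp 10 / exp 7 = (exp 3 :: real)" by (simp add: exp_diff[symmetric])
    moreover have "exp 10 * real n powr (- 3 * \<alpha>) / exp 7 = exp 3 * real n powr (-3*\<alpha>)"
      using e by (metis times_divide_eq_left)
    ultimately show ?thesis unfolding b_def c by (simp add: power_mult_distrib)
  qed
  have c0: "c > 0" unfolding c using N by simp
  have bc: "b \<le> c"
  proof -
    have "c^2 \<le> c" using c0 c1 by (simp add: power2_eq_square)
    moreover have "c^2 / exp 7 \<le> c^2" using c0 by (simp add: divide_le_eq)
    ultimately show ?thesis using cb by linarith
  qed
  have "b^k = b powr real k" using b0 by (simp add: powr_realpow)
  also have "\<dots> \<le> b powr m" by (rule powr_mono') (use km b0 bc c1 in auto)
  also have "\<dots> \<le> c powr m" by (rule powr_mono2) (use m1 b0 bc in auto)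
  finally show ?thesis using s1 by linarith
qed


theorem lemma3p6:
  fixes \<alpha> :: real and n h :: nat
  assumes "\<alpha> > 0" and "n > 0" and "h > 0"
  shows "real (card {\<pi> \<in> permutations_of_set {1..int n}.
                real (ord_int \<pi> (shift_seq \<pi> (int h))) \<ge> real n powr (2/3 + \<alpha>)})
           / real (card (permutations_of_set {1..int n}))
         \<le> (exp 5 * real n powr (- 3 * \<alpha> / 2)) powr (real n powr (2/3 + \<alpha>))"
proof -
  define m where "m = real n powr (2/3 + \<alpha>)"
  define k where "k = nat \<lceil>m\<rceil>"
  define c where "c = exp 5 * real n powr (- 3 * \<alpha> / 2)"
  let ?P = "permutations_of_set {1..int n}"
  let ?S = "{\<pi> \<in> ?P. real (ord_int \<pi> (shift_seq \<pi> (int h))) \<ge> real n powr (2/3 + \<alpha>)}"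
  let ?A = "{\<pi> \<in> ?P. \<exists>\<rho>. subseq \<rho> \<pi> \<and> subseq \<rho> (shift_seq \<pi> (int h)) \<and> length \<rho> = k}"
  have N: "real n \<ge> 1" using assms by simp
  have m1: "m \<ge> 1" unfolding m_def by (rule ge_one_powr_ge_zero[OF N]) (use assms in auto)
  have km: "real k \<ge> m" unfolding k_def using m1 by linarith
  have fP: "finite ?P" by simp
  have cP: "card ?P = fact n" by simp
  have SA: "?S \<subseteq> ?A"
  proof
    fix \<pi> assume pS: "\<pi> \<in> ?S"
    define \<sigma> where "\<sigma> = shift_seq \<pi> (int h)"
    have p: "\<pi> \<in> ?P" and o: "real (ord_int \<pi> \<sigma>) \<ge> m" using pS unfolding m_def \<sigma>_def by auto
    let ?L = "{length \<rho> | \<rho>. subseq \<rho> \<pi> \<and> subseq \<rho> \<sigma>}"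
    have fin: "finite ?L"
      by (rule finite_subset[of _ "{..length \<pi>}"]) (auto dest: list_emb_length)
    have ne: "?L \<noteq> {}" by blast
    have "ord_int \<pi> \<sigma> \<in> ?L" unfolding ord_int_def using Max_in[OF fin ne] .
    then have "\<exists>\<rho>. subseq \<rho> \<pi> \<and> subseq \<rho> \<sigma> \<and> length \<rho> = ord_int \<pi> \<sigma>" by auto
    then obtain \<rho> where r: "subseq \<rho> \<pi>" "subseq \<rho> \<sigma>" "length \<rho> = ord_int \<pi> \<sigma>" by blast
    have kle: "k \<le> ord_int \<pi> \<sigma>" unfolding k_def using o by (simp add: ceiling_le_iff nat_le_iff)
    have t: "subseq (take k \<rho>) \<rho>" by (rule prefix_imp_subseq) (rule take_is_prefix)
    have "subseq (take k \<rho>) \<pi>" "subseq (take k \<rho>) \<sigma>" "length (take k \<rho>) = k"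
      using subseq_order.trans[OF t r(1)] subseq_order.trans[OF t r(2)] r(3) kle by auto
    then show "\<pi> \<in> ?A" using p unfolding \<sigma>_def by blast
  qed
  have fA: "finite ?A" using fP by simp
  have cSA: "card ?S \<le> card ?A" by (rule card_mono[OF fA SA])
  have LHS_eq: "real (card ?S) / real (card ?P) = real (card ?S) / fact n" using cP by simp
  show ?thesis
  proof (cases "c \<ge> 1")
    case True
    have "card ?S \<le> card ?P" by (rule card_mono[OF fP]) auto
    then have le: "real (card ?S) \<le> real (card ?P)" by (simp only: of_nat_le_iff)
    have pos: "real (card ?P) > 0" using cP by simp
    have "real (card ?S) / real (card ?P) \<le> 1" using le pos by simp
    also have "1 \<le> c powr m" by (rule ge_one_powr_ge_zero[OF True]) (use m1 in auto)
    finally show ?thesis unfolding c_def m_def .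
  next
    case False
    then have c1: "c < 1" by simp
    show ?thesis
    proof (cases "k \<le> n")
      case False
      have Ae: "?A = {}"
      proof (rule ccontr)
        assume "?A \<noteq> {}"
        then obtain \<pi> \<rho> where "\<pi> \<in> ?P" "subseq \<rho> \<pi>" "length \<rho> = k" by blast
        then show False using perm_props(1)[of \<pi> n] False by (auto dest: list_emb_length)
      qed
      have "card ?A = 0" unfolding Ae by simp
      then have "card ?S = 0" using cSA by linarith
      then have "real (card ?S) / real (card ?P) = 0" by (simp only: of_nat_0 div_0)
      then show ?thesis using powr_ge_zero[of c m] unfolding c_def m_def by linarith
    next
      case True
      have cA: "card ?A \<le> (n choose k)^2 * \<Prod>{k+1..n}" by (rule count_A) (use assms True in auto)
      have fn: "fact n = fact k * \<Prod>{k+1..n}"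
      proof -
        have "(fact n :: nat) = fact k * (fact n div fact k)" using fact_dvd[OF True] by (rule dvd_mult_div_cancel[symmetric])
        then show ?thesis using fact_div_fact[OF True] by simp
      qed
      have pr: "\<Prod>{k+1..n} > (0::nat)" by (simp add: prod_pos)
      have "real (card ?S) / real (card ?P) \<le> real ((n choose k)^2 * \<Prod>{k+1..n}) / real (fact n)"
      proof -
        have "card ?S \<le> (n choose k)^2 * \<Prod>{k+1..n}" using cSA cA by linarith
        then have le: "real (card ?S) \<le> real ((n choose k)^2 * \<Prod>{k+1..n})" by (simp only: of_nat_le_iff)
        show ?thesis unfolding cP by (rule divide_right_mono[OF le]) simp
      qed
      also have "\<dots> = real (n choose k)^2 / fact k"
        using pr by (simp add: fn)
      also have "\<dots> \<le> c powr m"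
        by (rule real_bound[OF assms(1) _ m_def km True c_def c1]) (use assms in auto)
      finally show ?thesis unfolding c_def m_def .
    qed
  qed
qed

end
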